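(* Let $\{A_t:\ t\in T_1\cup T_2\}$ be a family of nonempty subsets of $X$ (or of $X^*$), where $T_1,T_2$ are disjoint nonempty index sets. Then for every $m>0$, \[ \Big[\overline{\operatorname{co}}\Big(\bigcup_{t\in T_1\cup T_2}A_t\Big)\Big]_\infty=\Big[\overline{\operatorname{co}}\Big(\Big(\bigcup_{t\in T_1}A_t\Big)\cup\Big(\bigcup_{t\in T_2}mA_t\Big)\Big)\Big]_\infty=\Big[\overline{\operatorname{co}}\Big(\bigcup_{t_1\in T_1,\,t_2\in T_2}(A_{t_1}+mA_{t_2})\Big)\Big]_\infty . \]
   Context: $X$ is a real separated locally convex space with dual $X^*$ carrying the weak$^*$ topology (closures in $X^*$ are weak$^*$-closures). $\overline{\operatorname{co}}$ denotes the closed convex hull, $+$ the Minkowski sum, and $mA=\{ma: a\in A\}$. For a nonempty closed convex set $C$, its recession cone is $C_\infty:=\{y:\ z+\lambda y\in C\text{ for some } z\in C \text{ and all }\lambda\ge 0\}$. *)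

theory Defs
  imports "HOL-Analysis.Analysis"
begin

text \<open>A separated (Hausdorff) locally convex vector topology on a real vector space.
  This covers both X and X* with its weak-star topology.\<close>
definition sep_lc_topology :: "'a::real_vector topology \<Rightarrow> bool" where
  "sep_lc_topology U \<longleftrightarrow>
     topspace U = UNIV \<and> Hausdorff_space U \<and>
     continuous_map (prod_topology U U) U (\<lambda>(x, y). x + y) \<and>
     continuous_map (prod_topology euclideanreal U) U (\<lambda>(c, x). c *\<^sub>R x) \<and>
     (\<forall>x W. openin U W \<and> x \<in> W \<longrightarrow>
        (\<exists>V. openin U V \<and> convex V \<and> x \<in> V \<and> V \<subseteq> W))"

text \<open>Closed convex hull w.r.t. the topology U: smallest closed convex superset.\<close>
definition closed_convex_hull :: "'a::real_vector topology \<Rightarrow> 'a set \<Rightarrow> 'a set" where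
  "closed_convex_hull U S = \<Inter>{C. closedin U C \<and> convex C \<and> S \<subseteq> C}"

text \<open>Recession cone C_infinity.\<close>
definition recession_cone :: "'a::real_vector set \<Rightarrow> 'a set" where
  "recession_cone C = {y. \<exists>z\<in>C. \<forall>l\<ge>0. z + l *\<^sub>R y \<in> C}"

end

theory Submission imports Defs begin


context
  fixes U :: "'a::real_vector topology"
  assumes U: "sep_lc_topology U"
begin

lemma tsp: "topspace U = UNIV" using U by (simp add: sep_lc_topology_def)

lemma cadd: "continuous_map (prod_topology U U) U (\<lambda>(x, y). x + y)"
  using U by (simp add: sep_lc_topology_def)

lemma cscal: "continuous_map (prod_topology euclideanreal U) U (\<lambda>(c, x). c *\<^sub>R x)"
  using U by (simp add: sep_lc_topology_def)

lemma lconv: "openin U W \<Longrightarrow> x \<in> W \<Longrightarrow> \<exists>V. openin U V \<and> convex V \<and> x \<in> V \<and> V \<subseteq> W"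
  using U by (simp add: sep_lc_topology_def)

lemma cscal1: "continuous_map U U (\<lambda>x. c *\<^sub>R x)"
proof -
  have "continuous_map U (prod_topology euclideanreal U) (\<lambda>x. (c, x))"
    by (intro continuous_map_pairedI) (auto simp: tsp)
  from continuous_map_compose[OF this cscal] show ?thesis by (simp add: o_def)
qed

lemma caff: "continuous_map U U (\<lambda>x. c *\<^sub>R x + v)"
proof -
  have "continuous_map U (prod_topology U U) (\<lambda>x. (c *\<^sub>R x, v))"
    by (intro continuous_map_pairedI cscal1) (auto simp: tsp)
  from continuous_map_compose[OF this cadd] show ?thesis by (simp add: o_def)
qed

lemma cline: "continuous_map euclideanreal U (\<lambda>t. t *\<^sub>R v)"
proof -
  have "continuous_map euclideanreal (prod_topology euclideanreal U) (\<lambda>t. (t, v))"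
    by (intro continuous_map_pairedI) (auto simp: tsp)
  from continuous_map_compose[OF this cscal] show ?thesis by (simp add: o_def)
qed

lemma small_mult:
  assumes "openin U V" "0 \<in> V"
  shows "\<exists>e>0. \<forall>t. \<bar>t\<bar> < e \<longrightarrow> t *\<^sub>R v \<in> V"
proof -
  have "openin euclideanreal {t \<in> topspace euclideanreal. t *\<^sub>R v \<in> V}"
    by (rule openin_continuous_map_preimage[OF cline assms(1)])
  hence "open {t. t *\<^sub>R v \<in> V}" by simp
  moreover have "(0::real) \<in> {t. t *\<^sub>R v \<in> V}" using assms by simp
  ultimately obtain e where e: "e > 0" "ball 0 e \<subseteq> {t. t *\<^sub>R v \<in> V}"
    by (meson open_contains_ball)
  show ?thesis
  proof (intro exI[of _ e] conjI allI impI)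
    fix t :: real assume "\<bar>t\<bar> < e"
    hence "t \<in> ball 0 e" by (simp add: dist_real_def)
    thus "t *\<^sub>R v \<in> V" using e by blast
  qed (use e in simp)
qed

lemma closure_convex:
  assumes "convex K"
  shows "convex (U closure_of K)"
proof (rule convexI)
  fix x y :: 'a and u v :: real
  assume x: "x \<in> U closure_of K" and y: "y \<in> U closure_of K" and uv: "0 \<le> u" "0 \<le> v" "u + v = 1"
  show "u *\<^sub>R x + v *\<^sub>R y \<in> U closure_of K"
    unfolding in_closure_of
  proof (intro conjI allI impI)
    show "u *\<^sub>R x + v *\<^sub>R y \<in> topspace U" by (simp add: tsp)
    fix W assume W: "u *\<^sub>R x + v *\<^sub>R y \<in> W \<and> openin U W"
    have c1: "continuous_map (prod_topology U U) U (\<lambda>p. u *\<^sub>R fst p)"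
      using continuous_map_compose[OF continuous_map_fst cscal1] by (simp add: o_def)
    have c2: "continuous_map (prod_topology U U) U (\<lambda>p. v *\<^sub>R snd p)"
      using continuous_map_compose[OF continuous_map_snd cscal1] by (simp add: o_def)
    have "continuous_map (prod_topology U U) (prod_topology U U) (\<lambda>p. (u *\<^sub>R fst p, v *\<^sub>R snd p))"
      by (rule continuous_map_pairedI[OF c1 c2])
    from continuous_map_compose[OF this cadd]
    have g: "continuous_map (prod_topology U U) U (\<lambda>p. u *\<^sub>R fst p + v *\<^sub>R snd p)"
      by (simp add: o_def case_prod_unfold)
    have "openin (prod_topology U U) {p \<in> topspace (prod_topology U U). u *\<^sub>R fst p + v *\<^sub>R snd p \<in> W}"
      using openin_continuous_map_preimage[OF g, of W] W by simp
    hence op: "openin (prod_topology U U) {p. u *\<^sub>R fst p + v *\<^sub>R snd p \<in> W}"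
      by (simp add: tsp)
    have xy: "(x, y) \<in> {p. u *\<^sub>R fst p + v *\<^sub>R snd p \<in> W}" using W by simp
    obtain W1 W2 where WW: "openin U W1" "openin U W2" "x \<in> W1" "y \<in> W2"
      "W1 \<times> W2 \<subseteq> {p. u *\<^sub>R fst p + v *\<^sub>R snd p \<in> W}"
      using op[unfolded openin_prod_topology_alt, rule_format, OF xy] by blast
    obtain a where a: "a \<in> K" "a \<in> W1" using x WW(1,3) unfolding in_closure_of by blast
    obtain b where b: "b \<in> K" "b \<in> W2" using y WW(2,4) unfolding in_closure_of by blast
    have "u *\<^sub>R a + v *\<^sub>R b \<in> K" using assms a b uv by (simp add: convexD)
    moreover have "(a, b) \<in> W1 \<times> W2" using a b by simp
    hence "u *\<^sub>R a + v *\<^sub>R b \<in> W" using WW(5) by auto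
    ultimately show "\<exists>z. z \<in> K \<and> z \<in> W" by blast
  qed
qed

lemma cch_closed: "closedin U (closed_convex_hull U S)"
  unfolding closed_convex_hull_def
proof (rule closedin_Inter)
  have "UNIV \<in> {C. closedin U C \<and> convex C \<and> S \<subseteq> C}"
    using closedin_topspace[of U] by (simp add: tsp)
  thus "{C. closedin U C \<and> convex C \<and> S \<subseteq> C} \<noteq> {}" by blast
qed simp

lemma hull_sub_cch: "convex hull S \<subseteq> closed_convex_hull U S"
  unfolding closed_convex_hull_def by (rule Inter_greatest) (simp add: hull_minimal)

lemma closure_sub_cch: "U closure_of (convex hull S) \<subseteq> closed_convex_hull U S"
  by (rule closure_of_minimal[OF hull_sub_cch cch_closed])

lemma cch_sub_closure: "closed_convex_hull U S \<subseteq> U closure_of (convex hull S)"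
proof -
  have "S \<subseteq> U closure_of (convex hull S)"
    using closure_of_subset[of "convex hull S" U] hull_subset[of S convex] by (auto simp: tsp)
  thus ?thesis unfolding closed_convex_hull_def
    by (intro Inter_lower) (auto simp: closure_convex)
qed


lemma GL:
  fixes S S' :: "'a set" and r :: real and d e a0 :: 'a
  assumes a0: "a0 \<in> convex hull S'" and r: "r > 0"
    and H: "\<And>x. x \<in> S \<Longrightarrow> \<exists>c. 0 \<le> c \<and> c \<le> 1 \<and> r *\<^sub>R x + d + c *\<^sub>R e \<in> convex hull S'"
  shows "recession_cone (closed_convex_hull U S) \<subseteq> recession_cone (closed_convex_hull U S')"
proof
  fix y assume "y \<in> recession_cone (closed_convex_hull U S)"
  then obtain z where zy: "\<And>l. l \<ge> 0 \<Longrightarrow> z + l *\<^sub>R y \<in> closed_convex_hull U S"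
    by (auto simp: recession_cone_def)
  let ?K = "{x. \<exists>c. 0 \<le> c \<and> c \<le> 1 \<and> r *\<^sub>R x + d + c *\<^sub>R e \<in> convex hull S'}"
  have cK: "convex ?K"
  proof (rule convexI)
    fix x1 x2 :: 'a and u v :: real
    assume "x1 \<in> ?K" "x2 \<in> ?K" and uv: "0 \<le> u" "0 \<le> v" "u + v = 1"
    then obtain c1 c2 where c1: "0 \<le> c1" "c1 \<le> 1" "r *\<^sub>R x1 + d + c1 *\<^sub>R e \<in> convex hull S'"
      and c2: "0 \<le> c2" "c2 \<le> 1" "r *\<^sub>R x2 + d + c2 *\<^sub>R e \<in> convex hull S'" by blast
    have "u *\<^sub>R (r *\<^sub>R x1 + d + c1 *\<^sub>R e) + v *\<^sub>R (r *\<^sub>R x2 + d + c2 *\<^sub>R e) \<in> convex hull S'"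
      using convexD[OF convex_convex_hull c1(3) c2(3) uv] .
    moreover have "u *\<^sub>R (r *\<^sub>R x1 + d + c1 *\<^sub>R e) + v *\<^sub>R (r *\<^sub>R x2 + d + c2 *\<^sub>R e)
       = r *\<^sub>R (u *\<^sub>R x1 + v *\<^sub>R x2) + (u + v) *\<^sub>R d + (u * c1 + v * c2) *\<^sub>R e"
      by (simp add: algebra_simps)
    ultimately have mem: "r *\<^sub>R (u *\<^sub>R x1 + v *\<^sub>R x2) + d + (u * c1 + v * c2) *\<^sub>R e \<in> convex hull S'"
      unfolding uv(3) by simp
    have "u * c1 \<le> u" using c1(2) uv(1) by (simp add: mult_left_le)
    moreover have "v * c2 \<le> v" using c2(2) uv(2) by (simp add: mult_left_le)
    moreover have "0 \<le> u * c1" "0 \<le> v * c2" using c1 c2 uv by simp_all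
    ultimately have "0 \<le> u * c1 + v * c2" "u * c1 + v * c2 \<le> 1" using uv(3) by linarith+
    with mem show "u *\<^sub>R x1 + v *\<^sub>R x2 \<in> ?K" by blast
  qed
  have hK: "convex hull S \<subseteq> ?K" using H by (intro hull_minimal cK) auto
  have "a0 \<in> closed_convex_hull U S'" using a0 hull_sub_cch by blast
  moreover have "\<forall>l\<ge>0. a0 + l *\<^sub>R y \<in> closed_convex_hull U S'"
  proof (intro allI impI)
    fix l :: real assume l: "l \<ge> 0"
    let ?p = "a0 + l *\<^sub>R y"
    have "?p \<in> U closure_of (convex hull S')"
      unfolding in_closure_of
    proof (intro conjI allI impI)
      show "?p \<in> topspace U" by (simp add: tsp)
      fix W assume W: "?p \<in> W \<and> openin U W"
      have o0: "openin U {w. 3 *\<^sub>R w + ?p \<in> W}"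
        using openin_continuous_map_preimage[OF caff W[THEN conjunct2], of 3 ?p] by (simp add: tsp)
      have "0 \<in> {w. 3 *\<^sub>R w + ?p \<in> W}" using W by simp
      then obtain V where V: "openin U V" "convex V" "0 \<in> V" "V \<subseteq> {w. 3 *\<^sub>R w + ?p \<in> W}"
        using lconv[OF o0] by blast
      obtain e1 where e1: "e1 > 0" "\<And>t. \<bar>t\<bar> < e1 \<Longrightarrow> t *\<^sub>R (r *\<^sub>R z - a0 + d) \<in> V"
        using small_mult[OF V(1,3)] by blast
      obtain e2 where e2: "e2 > 0" "\<And>t. \<bar>t\<bar> < e2 \<Longrightarrow> t *\<^sub>R e \<in> V"
        using small_mult[OF V(1,3)] by blast
      define t where "t = min 1 (min e1 e2) / 2"
      have t: "0 < t" "t \<le> 1" "t < e1" "t < e2" using e1 e2 by (auto simp: t_def)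
      define zt where "zt = z + (l / (t*r)) *\<^sub>R y"
      have "l / (t*r) \<ge> 0" using l t r by simp
      hence "zt \<in> closed_convex_hull U S" unfolding zt_def by (rule zy)
      hence zt: "zt \<in> U closure_of (convex hull S)" using cch_sub_closure by blast
      have "openin U {x \<in> topspace U. (t*r) *\<^sub>R x + (- (t*r) *\<^sub>R zt) \<in> V}"
        by (rule openin_continuous_map_preimage[OF caff V(1)])
      hence oN: "openin U {x. (t*r) *\<^sub>R x + (- (t*r) *\<^sub>R zt) \<in> V}" by (simp add: tsp)
      have zin: "zt \<in> {x. (t*r) *\<^sub>R x + (- (t*r) *\<^sub>R zt) \<in> V}" using V(3) by simp
      have "\<forall>T. zt \<in> T \<and> openin U T \<longrightarrow> (\<exists>y. y \<in> convex hull S \<and> y \<in> T)"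
        using zt by (simp add: in_closure_of)
      from this[rule_format, OF conjI[OF zin oN]]
      obtain x where x: "x \<in> convex hull S" "(t*r) *\<^sub>R x + (- (t*r) *\<^sub>R zt) \<in> V"
        by blast
      obtain c where c: "0 \<le> c" "c \<le> 1" "r *\<^sub>R x + d + c *\<^sub>R e \<in> convex hull S'"
        using hK x(1) by blast
      define q where "q = (1 - t) *\<^sub>R a0 + t *\<^sub>R (r *\<^sub>R x + d + c *\<^sub>R e)"
      have q: "q \<in> convex hull S'" unfolding q_def
        by (rule convexD[OF convex_convex_hull a0 c(3)]) (use t in auto)
      define w1 where "w1 = t *\<^sub>R (r *\<^sub>R z - a0 + d)"
      define w2 where "w2 = (t*c) *\<^sub>R e"
      define w3 where "w3 = (t*r) *\<^sub>R x + (- (t*r) *\<^sub>R zt)"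
      have tc: "t*c \<le> t" using t(1) c(2) by (simp add: mult_left_le)
      have "\<bar>t*c\<bar> = t*c" using t(1) c(1) by simp
      hence "\<bar>t*c\<bar> < e2" using tc t(4) by linarith
      have w1: "w1 \<in> V" unfolding w1_def by (rule e1(2)) (use t in simp)
      have w2: "w2 \<in> V" unfolding w2_def by (rule e2(2)) fact
      have w3: "w3 \<in> V" using x(2) unfolding w3_def .
      have "(1/2) *\<^sub>R w2 + (1/2) *\<^sub>R w3 \<in> V" by (rule convexD[OF V(2) w2 w3]) auto
      hence "(1/3) *\<^sub>R w1 + (2/3) *\<^sub>R ((1/2) *\<^sub>R w2 + (1/2) *\<^sub>R w3) \<in> V"
        by (intro convexD[OF V(2) w1]) auto
      moreover have "(1/3) *\<^sub>R w1 + (2/3) *\<^sub>R ((1/2) *\<^sub>R w2 + (1/2) *\<^sub>R w3) = (1/3) *\<^sub>R (w1 + w2 + w3)"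
        by (simp add: scaleR_add_right)
      ultimately have avg: "(1/3) *\<^sub>R (w1 + w2 + w3) \<in> V" by simp
      have tz: "(t*r) *\<^sub>R zt = (t*r) *\<^sub>R z + l *\<^sub>R y" using t r by (simp add: zt_def scaleR_add_right)
      have w3eq: "w3 = (t*r) *\<^sub>R x - (t*r) *\<^sub>R z - l *\<^sub>R y"
        unfolding w3_def scaleR_minus_left tz by simp
      have "q = (w1 + w2 + w3) + ?p"
        unfolding q_def w1_def w2_def w3eq by (simp add: algebra_simps)
      moreover have "3 *\<^sub>R ((1/3) *\<^sub>R (w1 + w2 + w3)) = w1 + w2 + w3" by simp
      moreover have "3 *\<^sub>R ((1/3) *\<^sub>R (w1 + w2 + w3)) + ?p \<in> W" using V(4) avg by blast
      ultimately have "q \<in> W" by simp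
      thus "\<exists>y. y \<in> convex hull S' \<and> y \<in> W" using q by blast
    qed
    thus "?p \<in> closed_convex_hull U S'" using closure_sub_cch by blast
  qed
  ultimately show "y \<in> recession_cone (closed_convex_hull U S')" by (auto simp: recession_cone_def)
qed

end
theorem lemma3:
  fixes U :: "'a::real_vector topology"
    and A :: "'i \<Rightarrow> 'a set" and T1 T2 :: "'i set" and m :: real
  assumes "sep_lc_topology U"
    and "T1 \<inter> T2 = {}" and "T1 \<noteq> {}" and "T2 \<noteq> {}"
    and "\<And>t. t \<in> T1 \<union> T2 \<Longrightarrow> A t \<noteq> {}"
    and "m > 0"
  shows "(recession_cone (closed_convex_hull U (\<Union>t\<in>T1 \<union> T2. A t))
           = recession_cone (closed_convex_hull U
               ((\<Union>t\<in>T1. A t) \<union> (\<Union>t\<in>T2. (\<lambda>a. m *\<^sub>R a) ` A t))))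
         \<and> ( recession_cone (closed_convex_hull U
               ((\<Union>t\<in>T1. A t) \<union> (\<Union>t\<in>T2. (\<lambda>a. m *\<^sub>R a) ` A t)))
           = recession_cone (closed_convex_hull U
               (\<Union>t1\<in>T1. \<Union>t2\<in>T2. {a + m *\<^sub>R b | a b. a \<in> A t1 \<and> b \<in> A t2})))"
proof -
  note UU = assms(1)
  define A' where "A' = (\<Union>t\<in>T1. A t)"
  define B' where "B' = (\<Union>t\<in>T2. A t)"
  define S1 where "S1 = (\<Union>t\<in>T1 \<union> T2. A t)"
  define S2 where "S2 = (\<Union>t\<in>T1. A t) \<union> (\<Union>t\<in>T2. (\<lambda>a. m *\<^sub>R a) ` A t)"
  define S3 where "S3 = (\<Union>t1\<in>T1. \<Union>t2\<in>T2. {a + m *\<^sub>R b | a b. a \<in> A t1 \<and> b \<in> A t2})"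
  have m: "m > 0" by fact
  obtain t1 where t1: "t1 \<in> T1" using assms(3) by blast
  obtain t2 where t2: "t2 \<in> T2" using assms(4) by blast
  obtain a0 where a0: "a0 \<in> A t1" using assms(5) t1 by blast
  obtain b0 where b0: "b0 \<in> A t2" using assms(5) t2 by blast
  have conv2: "u *\<^sub>R x + (1 - u) *\<^sub>R y \<in> convex hull S"
    if "x \<in> S" "y \<in> S" "0 \<le> u" "u \<le> 1" for x y :: 'a and S u
    by (rule convexD[OF convex_convex_hull hull_inc[OF that(1)] hull_inc[OF that(2)]]) (use that in auto)
  have a0S1: "a0 \<in> S1" using a0 t1 by (auto simp: S1_def)
  have a0S2: "a0 \<in> S2" using a0 t1 by (auto simp: S2_def)
  have S1S: "x \<in> S1 \<Longrightarrow> (\<exists>t\<in>T1. x \<in> A t) \<or> (\<exists>t\<in>T2. x \<in> A t)" for x by (auto simp: S1_def)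
  have S2S: "x \<in> S2 \<Longrightarrow> (\<exists>t\<in>T1. x \<in> A t) \<or> (\<exists>t\<in>T2. \<exists>b \<in> A t. x = m *\<^sub>R b)" for x by (auto simp: S2_def)
  have inS2a: "x \<in> A t \<Longrightarrow> t \<in> T1 \<Longrightarrow> x \<in> S2" for x t by (auto simp: S2_def)
  have inS2b: "b \<in> A t \<Longrightarrow> t \<in> T2 \<Longrightarrow> m *\<^sub>R b \<in> S2" for b t by (auto simp: S2_def)
  have inS1: "x \<in> A t \<Longrightarrow> t \<in> T1 \<union> T2 \<Longrightarrow> x \<in> S1" for x t by (auto simp: S1_def)
  have inS3: "a \<in> A s1 \<Longrightarrow> s1 \<in> T1 \<Longrightarrow> b \<in> A s2 \<Longrightarrow> s2 \<in> T2 \<Longrightarrow> a + m *\<^sub>R b \<in> S3"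
    for a b s1 s2 unfolding S3_def by blast
  (* S1 -> S2 *)
  have i12: "recession_cone (closed_convex_hull U S1) \<subseteq> recession_cone (closed_convex_hull U S2)"
  proof (rule GL[OF UU hull_inc[OF a0S2], of "min 1 m" _ a0 "- a0"])
    show "0 < min 1 m" using m by simp
    fix x assume "x \<in> S1"
    from S1S[OF this] show "\<exists>c. 0 \<le> c \<and> c \<le> 1 \<and> min 1 m *\<^sub>R x + a0 + c *\<^sub>R - a0 \<in> convex hull S2"
    proof
      assume "\<exists>t\<in>T1. x \<in> A t"
      then obtain t where "t \<in> T1" "x \<in> A t" by blast
      hence "min 1 m *\<^sub>R x + (1 - min 1 m) *\<^sub>R a0 \<in> convex hull S2"
        using conv2[OF inS2a a0S2] m by simp
      moreover have "min 1 m *\<^sub>R x + (1 - min 1 m) *\<^sub>R a0 = min 1 m *\<^sub>R x + a0 + min 1 m *\<^sub>R - a0"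
        by (simp add: algebra_simps)
      ultimately show ?thesis using m by (intro exI[of _ "min 1 m"]) auto
    next
      assume "\<exists>t\<in>T2. x \<in> A t"
      then obtain t where t: "t \<in> T2" "x \<in> A t" by blast
      have le: "min 1 m / m \<le> 1" "0 \<le> min 1 m / m" using m by (auto simp: min_def)
      have "(min 1 m / m) *\<^sub>R (m *\<^sub>R x) + (1 - min 1 m / m) *\<^sub>R a0 \<in> convex hull S2"
        using conv2[OF inS2b[OF t(2,1)] a0S2 le(2) le(1)] .
      moreover have "(min 1 m / m) *\<^sub>R (m *\<^sub>R x) + (1 - min 1 m / m) *\<^sub>R a0
          = min 1 m *\<^sub>R x + a0 + (min 1 m / m) *\<^sub>R - a0"
        using m by (simp add: algebra_simps)
      ultimately show ?thesis using le by (intro exI[of _ "min 1 m / m"]) auto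
    qed
  qed
  (* S2 -> S1 *)
  have i21: "recession_cone (closed_convex_hull U S2) \<subseteq> recession_cone (closed_convex_hull U S1)"
  proof (rule GL[OF UU hull_inc[OF a0S1], of "min 1 (1/m)" _ a0 "- a0"])
    show "0 < min 1 (1/m)" using m by simp
    fix x assume "x \<in> S2"
    from S2S[OF this] show "\<exists>c. 0 \<le> c \<and> c \<le> 1 \<and> min 1 (1/m) *\<^sub>R x + a0 + c *\<^sub>R - a0 \<in> convex hull S1"
    proof
      assume "\<exists>t\<in>T1. x \<in> A t"
      then obtain t where "t \<in> T1" "x \<in> A t" by blast
      hence "min 1 (1/m) *\<^sub>R x + (1 - min 1 (1/m)) *\<^sub>R a0 \<in> convex hull S1"
        using conv2[OF inS1 a0S1] m by simp
      moreover have "min 1 (1/m) *\<^sub>R x + (1 - min 1 (1/m)) *\<^sub>R a0 = min 1 (1/m) *\<^sub>R x + a0 + min 1 (1/m) *\<^sub>R - a0"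
        by (simp add: algebra_simps)
      ultimately show ?thesis using m by (intro exI[of _ "min 1 (1/m)"]) auto
    next
      assume "\<exists>t\<in>T2. \<exists>b\<in>A t. x = m *\<^sub>R b"
      then obtain t b where t: "t \<in> T2" "b \<in> A t" "x = m *\<^sub>R b" by blast
      have le: "min 1 (1/m) * m \<le> 1" "0 \<le> min 1 (1/m) * m" using m by (auto simp: min_def field_simps)
      have "(min 1 (1/m) * m) *\<^sub>R b + (1 - min 1 (1/m) * m) *\<^sub>R a0 \<in> convex hull S1"
        using conv2[OF inS1[OF t(2)] a0S1 le(2) le(1)] t(1) by simp
      moreover have "(min 1 (1/m) * m) *\<^sub>R b + (1 - min 1 (1/m) * m) *\<^sub>R a0
          = min 1 (1/m) *\<^sub>R x + a0 + (min 1 (1/m) * m) *\<^sub>R - a0"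
        using t(3) by (simp add: algebra_simps)
      ultimately show ?thesis using le by (intro exI[of _ "min 1 (1/m) * m"]) auto
    qed
  qed
  (* S3 -> S2 *)
  have i32: "recession_cone (closed_convex_hull U S3) \<subseteq> recession_cone (closed_convex_hull U S2)"
  proof (rule GL[OF UU hull_inc[OF a0S2], of "1/2" _ 0 0])
    show "0 < (1/2::real)" by simp
    fix x assume "x \<in> S3"
    then obtain s1 s2 a b where st: "s1 \<in> T1" "s2 \<in> T2" "a \<in> A s1" "b \<in> A s2" "x = a + m *\<^sub>R b"
      unfolding S3_def by blast
    have "(1/2::real) *\<^sub>R a + (1 - 1/2) *\<^sub>R (m *\<^sub>R b) \<in> convex hull S2"
      by (rule conv2[OF inS2a[OF st(3,1)] inS2b[OF st(4,2)]]) auto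
    moreover have "(1/2::real) *\<^sub>R a + (1 - 1/2) *\<^sub>R (m *\<^sub>R b) = (1/2) *\<^sub>R x + 0 + 0 *\<^sub>R 0"
      using st(5) by (simp add: algebra_simps)
    ultimately show "\<exists>c. 0 \<le> c \<and> c \<le> 1 \<and> (1/2) *\<^sub>R x + 0 + c *\<^sub>R 0 \<in> convex hull S2"
      by (intro exI[of _ 0]) simp
  qed
  (* S2 -> S3 *)
  have i23: "recession_cone (closed_convex_hull U S2) \<subseteq> recession_cone (closed_convex_hull U S3)"
  proof (rule GL[OF UU hull_inc[OF inS3[OF a0 t1 b0 t2]], of 1 _ "m *\<^sub>R b0" "a0 - m *\<^sub>R b0"])
    show "0 < (1::real)" by simp
    fix x assume "x \<in> S2"
    from S2S[OF this] show "\<exists>c. 0 \<le> c \<and> c \<le> 1 \<and> 1 *\<^sub>R x + m *\<^sub>R b0 + c *\<^sub>R (a0 - m *\<^sub>R b0) \<in> convex hull S3"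
    proof
      assume "\<exists>t\<in>T1. x \<in> A t"
      then obtain t where "t \<in> T1" "x \<in> A t" by blast
      hence "x + m *\<^sub>R b0 \<in> convex hull S3" using inS3[OF _ _ b0 t2] hull_inc by metis
      thus ?thesis by (intro exI[of _ 0]) simp
    next
      assume "\<exists>t\<in>T2. \<exists>b\<in>A t. x = m *\<^sub>R b"
      then obtain t b where t: "t \<in> T2" "b \<in> A t" "x = m *\<^sub>R b" by blast
      have "a0 + m *\<^sub>R b \<in> convex hull S3" using inS3[OF a0 t1 t(2,1)] hull_inc by metis
      moreover have "a0 + m *\<^sub>R b = 1 *\<^sub>R x + m *\<^sub>R b0 + 1 *\<^sub>R (a0 - m *\<^sub>R b0)"
        using t(3) by (simp add: algebra_simps)
      ultimately show ?thesis by (intro exI[of _ 1]) simp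
    qed
  qed
  show ?thesis using i12 i21 i23 i32 unfolding S1_def S2_def S3_def by blast
qed

end
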